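(* Let $\Gamma$ be a finitely generated group acting by permutations on a countable set $X$, and $w:X\to(0,\infty)$ balanced. If there exists a $w$-compression system, then there is no $w$-invariant mean on $X$.
   Context: $w$ is balanced: for every $g\in\Gamma$, $x\mapsto w(gx)/w(x)$ is bounded on $X$. A $w$-compression system is a finite set $T\subset\Gamma$ together with bounded nonnegative functions $\Psi_g:X\to\mathbb{R}$ ($g\in T$) such that for every $x\in X$: $\sum_{g\in T}\Psi_g(x)=1$ and $\sum_{g\in T}\Psi_g(g^{-1}x)\frac{w(g^{-1}x)}{w(x)}<\frac12$. A mean on $X$ is a finitely additive probability measure on all subsets of $X$ (extended to $\ell^\infty(X)$); it is $w$-invariant if $\mu(gA)=\int_A\frac{w(gx)}{w(x)}\,d\mu(x)$ for all $g\in\Gamma$, $A\subseteq X$. *)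

theory Defs
  imports "HOL-Analysis.Analysis" "HOL-Algebra.Group_Action" "HOL-Algebra.Generated_Groups"
begin

definition fin_generated :: "('g, 'b) monoid_scheme \<Rightarrow> bool" where
  "fin_generated G \<longleftrightarrow> (\<exists>S. finite S \<and> S \<subseteq> carrier G \<and> generate G S = carrier G)"

definition bounded_on :: "'x set \<Rightarrow> ('x \<Rightarrow> real) \<Rightarrow> bool" where
  "bounded_on X f \<longleftrightarrow> (\<exists>C. \<forall>x\<in>X. \<bar>f x\<bar> \<le> C)"

definition balanced :: "('g, 'b) monoid_scheme \<Rightarrow> 'x set \<Rightarrow> ('g \<Rightarrow> 'x \<Rightarrow> 'x) \<Rightarrow> ('x \<Rightarrow> real) \<Rightarrow> bool" where
  "balanced G X \<phi> w \<longleftrightarrow> (\<forall>g\<in>carrier G. bounded_on X (\<lambda>x. w (\<phi> g x) / w x))"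

definition compression_system ::
  "('g, 'b) monoid_scheme \<Rightarrow> 'x set \<Rightarrow> ('g \<Rightarrow> 'x \<Rightarrow> 'x) \<Rightarrow> ('x \<Rightarrow> real)
     \<Rightarrow> 'g set \<Rightarrow> ('g \<Rightarrow> 'x \<Rightarrow> real) \<Rightarrow> bool" where
  "compression_system G X \<phi> w T \<Psi> \<longleftrightarrow>
     finite T \<and> T \<subseteq> carrier G \<and>
     (\<forall>g\<in>T. bounded_on X (\<Psi> g) \<and> (\<forall>x\<in>X. \<Psi> g x \<ge> 0)) \<and>
     (\<forall>x\<in>X. (\<Sum>g\<in>T. \<Psi> g x) = 1 \<and>
        (\<Sum>g\<in>T. \<Psi> g (\<phi> (inv\<^bsub>G\<^esub> g) x) * (w (\<phi> (inv\<^bsub>G\<^esub> g) x) / w x)) < 1/2)"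

text \<open>A mean on X, given as its (unique) extension to l-infinity(X): a positive,
  normalised linear functional on the bounded functions on X.  The underlying
  finitely additive probability measure is A \<mapsto> m (indicator A).\<close>
definition is_mean :: "'x set \<Rightarrow> (('x \<Rightarrow> real) \<Rightarrow> real) \<Rightarrow> bool" where
  "is_mean X m \<longleftrightarrow>
     (\<forall>f h. bounded_on X f \<longrightarrow> bounded_on X h \<longrightarrow> m (\<lambda>x. f x + h x) = m f + m h) \<and>
     (\<forall>c f. bounded_on X f \<longrightarrow> m (\<lambda>x. c * f x) = c * m f) \<and>
     (\<forall>f. bounded_on X f \<longrightarrow> (\<forall>x\<in>X. f x \<ge> 0) \<longrightarrow> m f \<ge> 0) \<and>
     m (\<lambda>x. 1) = 1"

definition w_invariant ::
  "('g, 'b) monoid_scheme \<Rightarrow> 'x set \<Rightarrow> ('g \<Rightarrow> 'x \<Rightarrow> 'x) \<Rightarrow> ('x \<Rightarrow> real)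
     \<Rightarrow> (('x \<Rightarrow> real) \<Rightarrow> real) \<Rightarrow> bool" where
  "w_invariant G X \<phi> w m \<longleftrightarrow>
     (\<forall>g\<in>carrier G. \<forall>A. A \<subseteq> X \<longrightarrow>
        m (indicator (\<phi> g ` A)) = m (\<lambda>x. indicator A x * (w (\<phi> g x) / w x)))"

end

theory Submission
  imports Defs
begin

lemma ga_inv1:
  assumes "group_action G X \<phi>" "g \<in> carrier G" "x \<in> X"
  shows "\<phi> (inv\<^bsub>G\<^esub> g) (\<phi> g x) = x"
proof -
  interpret group_action G X \<phi> by fact
  have "\<phi> (inv\<^bsub>G\<^esub> g) (\<phi> g x) = \<phi> (inv\<^bsub>G\<^esub> g \<otimes>\<^bsub>G\<^esub> g) x"
    using composition_rule assms group.inv_closed group_hom.axioms(1) group_hom by fastforce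
  also have "\<dots> = \<phi> \<one>\<^bsub>G\<^esub> x" using assms group.l_inv group.r_inv group_hom.axioms(1) group_hom by metis
  also have "\<dots> = x" using id_eq_one assms(3) by (metis restrict_apply')
  finally show ?thesis .
qed

lemma ga_inv2:
  assumes "group_action G X \<phi>" "g \<in> carrier G" "x \<in> X"
  shows "\<phi> g (\<phi> (inv\<^bsub>G\<^esub> g) x) = x"
proof -
  interpret group_action G X \<phi> by fact
  have "\<phi> g (\<phi> (inv\<^bsub>G\<^esub> g) x) = \<phi> (g \<otimes>\<^bsub>G\<^esub> inv\<^bsub>G\<^esub> g) x"
    using composition_rule assms group.inv_closed group_hom.axioms(1) group_hom by fastforce
  also have "\<dots> = \<phi> \<one>\<^bsub>G\<^esub> x" using assms group.l_inv group.r_inv group_hom.axioms(1) group_hom by metis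
  also have "\<dots> = x" using id_eq_one assms(3) by (metis restrict_apply')
  finally show ?thesis .
qed

lemma ga_closed:
  assumes "group_action G X \<phi>" "g \<in> carrier G" "x \<in> X"
  shows "\<phi> g x \<in> X"
  using group_action.element_image[OF assms] by blast

lemma bo_add: "bounded_on X f \<Longrightarrow> bounded_on X h \<Longrightarrow> bounded_on X (\<lambda>x. f x + h x)"
proof -
  assume "bounded_on X f" "bounded_on X h"
  then obtain A B where A: "\<forall>x\<in>X. \<bar>f x\<bar> \<le> A" and B: "\<forall>x\<in>X. \<bar>h x\<bar> \<le> B"
    unfolding bounded_on_def by blast
  have "\<forall>x\<in>X. \<bar>f x + h x\<bar> \<le> A + B"
  proof
    fix x assume x: "x \<in> X"
    have "\<bar>f x + h x\<bar> \<le> \<bar>f x\<bar> + \<bar>h x\<bar>" by (rule abs_triangle_ineq)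
    then show "\<bar>f x + h x\<bar> \<le> A + B" using A B x by fastforce
  qed
  then show ?thesis unfolding bounded_on_def by blast
qed

lemma bo_mult: "bounded_on X f \<Longrightarrow> bounded_on X h \<Longrightarrow> bounded_on X (\<lambda>x. f x * h x)"
proof -
  assume "bounded_on X f" "bounded_on X h"
  then obtain A B where A: "\<forall>x\<in>X. \<bar>f x\<bar> \<le> A" and B: "\<forall>x\<in>X. \<bar>h x\<bar> \<le> B"
    unfolding bounded_on_def by blast
  have "\<forall>x\<in>X. \<bar>f x * h x\<bar> \<le> A * B"
  proof
    fix x assume "x \<in> X"
    then show "\<bar>f x * h x\<bar> \<le> A * B" using A B
      by (simp add: abs_mult mult_mono')
  qed
  then show ?thesis unfolding bounded_on_def by blast
qed

lemma bo_const: "bounded_on X (\<lambda>x. c)"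
  unfolding bounded_on_def by blast

lemma bo_cmult: assumes "bounded_on X f" shows "bounded_on X (\<lambda>x. c * f x)"
  by (rule bo_mult[OF bo_const assms])

lemma bo_indicator: "bounded_on X (indicator A)"
  unfolding bounded_on_def by (rule exI[of _ 1]) (simp add: indicator_def)

lemma bo_sum: "finite K \<Longrightarrow> (\<And>k. k \<in> K \<Longrightarrow> bounded_on X (F k)) \<Longrightarrow> bounded_on X (\<lambda>x. \<Sum>k\<in>K. F k x)"
proof (induction K rule: finite_induct)
  case empty then show ?case by (simp add: bo_const)
next
  case (insert a K) then show ?case by (simp add: bo_add)
qed

lemma bo_comp: "bounded_on X f \<Longrightarrow> (\<And>x. x \<in> X \<Longrightarrow> h x \<in> X) \<Longrightarrow> bounded_on X (\<lambda>x. f (h x))"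
  unfolding bounded_on_def by blast

lemma bo_cong: "bounded_on X f \<Longrightarrow> (\<And>x. x \<in> X \<Longrightarrow> h x = f x) \<Longrightarrow> bounded_on X h"
  unfolding bounded_on_def by auto

lemma mean_add: assumes "is_mean X m" "bounded_on X f" "bounded_on X h"
  shows "m (\<lambda>x. f x + h x) = m f + m h"
proof -
  have A: "\<forall>f h. bounded_on X f \<longrightarrow> bounded_on X h \<longrightarrow> m (\<lambda>x. f x + h x) = m f + m h"
    using assms(1) unfolding is_mean_def by (rule conjunct1)
  show ?thesis using spec[OF spec[OF A, of f], of h] assms(2,3) by simp
qed

lemma mean_cmult: assumes "is_mean X m" "bounded_on X f"
  shows "m (\<lambda>x. c * f x) = c * m f"
proof -
  have A: "\<forall>c f. bounded_on X f \<longrightarrow> m (\<lambda>x. c * f x) = c * m f"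
    using assms(1) unfolding is_mean_def by (elim conjE)
  show ?thesis using spec[OF spec[OF A, of c], of f] assms(2) by simp
qed

lemma mean_nonneg: assumes "is_mean X m" "bounded_on X f" "\<And>x. x \<in> X \<Longrightarrow> f x \<ge> 0"
  shows "m f \<ge> 0"
proof -
  have A: "\<forall>f. bounded_on X f \<longrightarrow> (\<forall>x\<in>X. f x \<ge> 0) \<longrightarrow> m f \<ge> 0"
    using assms(1) unfolding is_mean_def by (elim conjE)
  have "\<forall>x\<in>X. f x \<ge> 0" using assms(3) by blast
  then show ?thesis using spec[OF A, of f] assms(2) by simp
qed

lemma mean_one: "is_mean X m \<Longrightarrow> m (\<lambda>x. 1) = 1"
  unfolding is_mean_def by (elim conjE)

lemma mean_const: assumes "is_mean X m" shows "m (\<lambda>x. c) = c"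
  using mean_cmult[OF assms bo_const[of X 1], of c] mean_one[OF assms] by simp

lemma mean_zero: assumes "is_mean X m" shows "m (\<lambda>x. 0) = 0"
  using mean_const[OF assms, of 0] .

lemma mean_diff: "is_mean X m \<Longrightarrow> bounded_on X f \<Longrightarrow> bounded_on X h \<Longrightarrow> m (\<lambda>x. f x + (-1) * h x) = m f - m h"
  using mean_add[of X m f "\<lambda>x. (-1) * h x"] mean_cmult[of X m h "-1"] bo_cmult[of X h "-1"] by simp

lemma mean_mono: "is_mean X m \<Longrightarrow> bounded_on X f \<Longrightarrow> bounded_on X h \<Longrightarrow> (\<And>x. x \<in> X \<Longrightarrow> f x \<le> h x) \<Longrightarrow> m f \<le> m h"
proof -
  assume a: "is_mean X m" "bounded_on X f" "bounded_on X h" "\<And>x. x \<in> X \<Longrightarrow> f x \<le> h x"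
  have "m (\<lambda>x. h x + (-1) * f x) \<ge> 0"
    using a by (intro mean_nonneg[OF a(1)] bo_add bo_cmult) auto
  then show ?thesis using mean_diff[OF a(1) a(3) a(2)] by simp
qed

lemma mean_cong: "is_mean X m \<Longrightarrow> bounded_on X f \<Longrightarrow> bounded_on X h \<Longrightarrow> (\<And>x. x \<in> X \<Longrightarrow> f x = h x) \<Longrightarrow> m f = m h"
proof -
  assume a: "is_mean X m" "bounded_on X f" "bounded_on X h" "\<And>x. x \<in> X \<Longrightarrow> f x = h x"
  have "m f \<le> m h" by (rule mean_mono[OF a(1) a(2) a(3)]) (simp add: a(4))
  moreover have "m h \<le> m f" by (rule mean_mono[OF a(1) a(3) a(2)]) (simp add: a(4))
  ultimately show ?thesis by simp
qed

lemma mean_approx: "is_mean X m \<Longrightarrow> bounded_on X f \<Longrightarrow> bounded_on X h \<Longrightarrow> (\<And>x. x \<in> X \<Longrightarrow> \<bar>f x - h x\<bar> \<le> e) \<Longrightarrow> \<bar>m f - m h\<bar> \<le> e"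
proof -
  assume a: "is_mean X m" "bounded_on X f" "bounded_on X h" "\<And>x. x \<in> X \<Longrightarrow> \<bar>f x - h x\<bar> \<le> e"
  have l1: "f x \<le> h x + e" if "x \<in> X" for x using a(4)[OF that] by linarith
  have l2: "h x \<le> f x + e" if "x \<in> X" for x using a(4)[OF that] by linarith
  have "m f \<le> m (\<lambda>x. h x + e)"
    by (rule mean_mono[OF a(1) a(2) bo_add[OF a(3) bo_const]]) (rule l1)
  also have "\<dots> = m h + e" using mean_add[OF a(1) a(3) bo_const] mean_const[OF a(1)] by simp
  finally have 1: "m f \<le> m h + e" .
  have "m h \<le> m (\<lambda>x. f x + e)"
    by (rule mean_mono[OF a(1) a(3) bo_add[OF a(2) bo_const]]) (rule l2)
  also have "\<dots> = m f + e" using mean_add[OF a(1) a(2) bo_const] mean_const[OF a(1)] by simp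
  finally show ?thesis using 1 by linarith
qed

lemma mean_sum:
  assumes mean: "is_mean X m"
  shows "finite K \<Longrightarrow> (\<And>k. k \<in> K \<Longrightarrow> bounded_on X (F k)) \<Longrightarrow> m (\<lambda>x. \<Sum>k\<in>K. F k x) = (\<Sum>k\<in>K. m (F k))"
proof (induction K rule: finite_induct)
  case empty then show ?case by (simp add: mean_zero[OF mean])
next
  case (insert a K)
  have "m (\<lambda>x. \<Sum>k\<in>insert a K. F k x) = m (\<lambda>x. F a x + (\<Sum>k\<in>K. F k x))"
    using insert by simp
  also have "\<dots> = m (F a) + m (\<lambda>x. \<Sum>k\<in>K. F k x)"
    using insert by (intro mean_add[OF mean] bo_sum) auto
  finally show ?case using insert by simp
qed

lemma floor_sum:
  fixes t :: real and N :: nat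
  assumes "0 \<le> t" "t \<le> real N"
  shows "(\<Sum>k\<in>{1..N}. (if real k \<le> t then 1 else 0 :: real)) = real (nat \<lfloor>t\<rfloor>)"
proof -
  have iff: "real k \<le> t \<longleftrightarrow> k \<le> nat \<lfloor>t\<rfloor>" for k :: nat
  proof -
    have "real k \<le> t \<longleftrightarrow> int k \<le> \<lfloor>t\<rfloor>" by (simp add: le_floor_iff)
    also have "\<dots> \<longleftrightarrow> k \<le> nat \<lfloor>t\<rfloor>" using assms(1) by (simp add: le_nat_iff)
    finally show ?thesis .
  qed
  have bN: "nat \<lfloor>t\<rfloor> \<le> N"
  proof -
    have "real (nat \<lfloor>t\<rfloor>) \<le> t" using iff by blast
    then have "real (nat \<lfloor>t\<rfloor>) \<le> real N" using assms(2) by linarith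
    then show ?thesis by simp
  qed
  have "(\<Sum>k\<in>{1..N}. (if real k \<le> t then 1 else 0 :: real)) = (\<Sum>k\<in>{1..N}. (if k \<le> nat \<lfloor>t\<rfloor> then 1 else 0 :: real))"
    by (rule sum.cong) (simp_all only: iff)
  also have "\<dots> = (\<Sum>k\<in>{1..nat \<lfloor>t\<rfloor>}. 1)"
  proof -
    have s: "{1..N} \<inter> {k. k \<le> nat \<lfloor>t\<rfloor>} = {1..nat \<lfloor>t\<rfloor>}" using bN by auto
    show ?thesis by (simp only: sum.If_cases finite_atLeastAtMost s) simp
  qed
  also have "\<dots> = real (nat \<lfloor>t\<rfloor>)" by simp
  finally show ?thesis .
qed

lemma small_zero:
  fixes d C :: real
  assumes "\<And>n::nat. n \<ge> 1 \<Longrightarrow> \<bar>d\<bar> \<le> C / real n"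
  shows "d = 0"
proof (rule ccontr)
  assume "d \<noteq> 0"
  then have dp: "\<bar>d\<bar> > 0" by simp
  obtain n :: nat where n: "real n > C / \<bar>d\<bar>" using reals_Archimedean2 by blast
  define n' where "n' = n + 1"
  have np: "real n' > 0" using n'_def by simp
  have "real n' > C / \<bar>d\<bar>" using n n'_def by simp
  then have c1: "C < real n' * \<bar>d\<bar>" using dp by (simp add: divide_less_eq)
  have "\<bar>d\<bar> \<le> C / real n'" using assms[of n'] n'_def by simp
  then have c2: "\<bar>d\<bar> * real n' \<le> C" using np by (simp add: pos_le_divide_eq)
  have "real n' * \<bar>d\<bar> = \<bar>d\<bar> * real n'" by (rule mult.commute)
  then show False using c1 c2 by linarith
qed

lemma key:
  assumes GA: "group_action G X \<phi>" and g: "g \<in> carrier G"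
    and mean: "is_mean X m" and winv: "w_invariant G X \<phi> w m"
    and rb: "bounded_on X (\<lambda>x. w (\<phi> g x) / w x)"
    and fb: "bounded_on X f" and fnn: "\<And>x. x \<in> X \<Longrightarrow> f x \<ge> 0"
  shows "m (\<lambda>x. f (\<phi> (inv\<^bsub>G\<^esub> g) x)) = m (\<lambda>x. f x * (w (\<phi> g x) / w x))"
proof -
  define r where "r = (\<lambda>x. w (\<phi> g x) / w x)"
  define h where "h = \<phi> (inv\<^bsub>G\<^esub> g)"
  have ig: "inv\<^bsub>G\<^esub> g \<in> carrier G"
    using g GA group.inv_closed group_action.group_hom group_hom.axioms(1) by metis
  have hX: "\<And>x. x \<in> X \<Longrightarrow> h x \<in> X" unfolding h_def using ga_closed[OF GA ig] .
  have rb': "bounded_on X r" using rb r_def by simp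
  obtain R0 where R0: "\<forall>x\<in>X. \<bar>r x\<bar> \<le> R0" using rb' unfolding bounded_on_def by blast
  define R where "R = max R0 0"
  have R: "\<And>x. x \<in> X \<Longrightarrow> \<bar>r x\<bar> \<le> R" "R \<ge> 0" using R0 R_def by auto
  obtain M where M: "\<forall>x\<in>X. \<bar>f x\<bar> \<le> M" using fb unfolding bounded_on_def by blast
  have fhb: "bounded_on X (\<lambda>x. f (h x))" using bo_comp[OF fb hX] .
  have frb: "bounded_on X (\<lambda>x. f x * r x)" using bo_mult[OF fb rb'] .
  have main: "\<bar>m (\<lambda>x. f (h x)) - m (\<lambda>x. f x * r x)\<bar> \<le> (1 + R) / real n" if n: "n \<ge> 1" for n :: nat
  proof -
    define N where "N = nat \<lceil>real n * M\<rceil>"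
    define A where "A = (\<lambda>k::nat. {x\<in>X. real k \<le> real n * f x})"
    define s where "s = (\<lambda>x. \<Sum>k\<in>{1..N}. (1 / real n) * indicator (A k) x)"
    have AX: "A k \<subseteq> X" for k unfolding A_def by auto
    have sb: "bounded_on X s" unfolding s_def by (intro bo_sum bo_cmult bo_indicator) auto
    have np: "real n > 0" using n by simp
    have sf: "\<bar>f x - s x\<bar> \<le> 1 / real n" if x: "x \<in> X" for x
    proof -
      define t where "t = real n * f x"
      have t0: "0 \<le> t" using fnn[OF x] np t_def by simp
      have "t \<le> real n * M" using M x np t_def by (simp add: abs_le_iff)
      also have "\<dots> \<le> real N" unfolding N_def by linarith
      finally have tN: "t \<le> real N" .
      have "s x = (1 / real n) * (\<Sum>k\<in>{1..N}. (if real k \<le> t then 1 else 0 :: real))"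
        unfolding s_def A_def t_def using x by (simp add: sum_distrib_left indicator_def of_bool_def)
      also have "\<dots> = real (nat \<lfloor>t\<rfloor>) / real n" using floor_sum[OF t0 tN] by simp
      finally have sx: "s x = real (nat \<lfloor>t\<rfloor>) / real n" .
      have fc: "real_of_int \<lfloor>t\<rfloor> \<le> t \<and> t < real_of_int (\<lfloor>t\<rfloor> + 1)" by (rule floor_correct)
      have fz: "\<lfloor>t\<rfloor> \<ge> 0" using t0 by simp
      have fn: "real (nat \<lfloor>t\<rfloor>) = real_of_int \<lfloor>t\<rfloor>" using fz by simp
      have fl: "t - 1 \<le> real (nat \<lfloor>t\<rfloor>)" "real (nat \<lfloor>t\<rfloor>) \<le> t"
        using fc fn by linarith+
      have "f x = t / real n" using np t_def by simp
      then have "f x - s x = (t - real (nat \<lfloor>t\<rfloor>)) / real n" using sx by (simp add: diff_divide_distrib)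
      moreover have "\<bar>t - real (nat \<lfloor>t\<rfloor>)\<bar> \<le> 1" unfolding abs_le_iff using fl by linarith
      ultimately show ?thesis using np by (simp add: divide_right_mono)
    qed
    have ind_eq: "indicator (A k) (h x) = (indicator (\<phi> g ` A k) x :: real)" if x: "x \<in> X" for x k
    proof -
      have "h x \<in> A k \<longleftrightarrow> x \<in> \<phi> g ` A k"
      proof
        assume "h x \<in> A k"
        moreover have "\<phi> g (h x) = x" unfolding h_def using ga_inv2[OF GA g x] .
        ultimately show "x \<in> \<phi> g ` A k" by (metis imageI)
      next
        assume "x \<in> \<phi> g ` A k"
        then obtain y where y: "y \<in> A k" "x = \<phi> g y" by blast
        then have "h x = y" unfolding h_def using ga_inv1[OF GA g] AX by blast
        then show "h x \<in> A k" using y by simp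
      qed
      then show ?thesis by (simp add: indicator_def)
    qed
    have b3: "bounded_on X (\<lambda>x. (1 / real n) * indicator (\<phi> g ` A k) x)" for k
      by (rule bo_cmult[OF bo_indicator])
    have b4: "bounded_on X (\<lambda>x. (1 / real n) * (indicator (A k) x * r x))" for k
      by (rule bo_cmult[OF bo_mult[OF bo_indicator rb']])
    have "m (\<lambda>x. s (h x)) = m (\<lambda>x. \<Sum>k\<in>{1..N}. (1 / real n) * indicator (\<phi> g ` A k) x)"
    proof (rule mean_cong[OF mean bo_comp[OF sb hX] bo_sum[OF _ b3]])
      show "finite {1..N}" by simp
      fix x assume x: "x \<in> X"
      show "s (h x) = (\<Sum>k\<in>{1..N}. (1 / real n) * indicator (\<phi> g ` A k) x)"
        unfolding s_def using ind_eq[OF x] by simp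
    qed
    also have "\<dots> = (\<Sum>k\<in>{1..N}. m (\<lambda>x. (1 / real n) * indicator (\<phi> g ` A k) x))"
      by (rule mean_sum[OF mean], simp, rule b3)
    also have "\<dots> = (\<Sum>k\<in>{1..N}. (1 / real n) * m (indicator (\<phi> g ` A k)))"
      by (rule sum.cong[OF refl], rule mean_cmult[OF mean bo_indicator])
    also have "\<dots> = (\<Sum>k\<in>{1..N}. (1 / real n) * m (\<lambda>x. indicator (A k) x * r x))"
    proof (rule sum.cong)
      fix k
      have "m (indicator (\<phi> g ` A k)) = m (\<lambda>x. indicator (A k) x * r x)"
        using winv g AX[of k] unfolding w_invariant_def r_def by blast
      then show "(1 / real n) * m (indicator (\<phi> g ` A k)) = (1 / real n) * m (\<lambda>x. indicator (A k) x * r x)"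
        by simp
    qed simp
    also have "\<dots> = (\<Sum>k\<in>{1..N}. m (\<lambda>x. (1 / real n) * (indicator (A k) x * r x)))"
      by (rule sum.cong[OF refl], rule mean_cmult[OF mean bo_mult[OF bo_indicator rb'], symmetric])
    also have "\<dots> = m (\<lambda>x. \<Sum>k\<in>{1..N}. (1 / real n) * (indicator (A k) x * r x))"
      by (rule mean_sum[OF mean, symmetric], simp, rule b4)
    also have "\<dots> = m (\<lambda>x. s x * r x)"
      unfolding s_def by (simp add: sum_distrib_right mult.assoc)
    finally have seq: "m (\<lambda>x. s (h x)) = m (\<lambda>x. s x * r x)" .
    have e1: "\<bar>m (\<lambda>x. f (h x)) - m (\<lambda>x. s (h x))\<bar> \<le> 1 / real n"
      by (rule mean_approx[OF mean fhb bo_comp[OF sb hX]]) (use sf hX in auto)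
    have e2: "\<bar>m (\<lambda>x. f x * r x) - m (\<lambda>x. s x * r x)\<bar> \<le> R / real n"
    proof (rule mean_approx[OF mean frb bo_mult[OF sb rb']])
      fix x assume x: "x \<in> X"
      have "\<bar>f x * r x - s x * r x\<bar> = \<bar>f x - s x\<bar> * \<bar>r x\<bar>" by (simp add: abs_mult left_diff_distrib[symmetric])
      also have "\<dots> \<le> (1 / real n) * R" by (rule mult_mono[OF sf[OF x] R(1)[OF x]]) simp_all
      finally show "\<bar>f x * r x - s x * r x\<bar> \<le> R / real n" by simp
    qed
    have "(1 + R) / real n = 1 / real n + R / real n" by (simp add: add_divide_distrib)
    then show ?thesis using e1 e2 seq by linarith
  qed
  have "m (\<lambda>x. f (h x)) - m (\<lambda>x. f x * r x) = 0"
    by (rule small_zero[of _ "1 + R"]) (rule main)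
  then show ?thesis unfolding h_def r_def by simp
qed

theorem proposition2p2:
  fixes G :: "('g, 'b) monoid_scheme" and X :: "'x set"
    and \<phi> :: "'g \<Rightarrow> 'x \<Rightarrow> 'x" and w :: "'x \<Rightarrow> real"
  assumes "group_action G X \<phi>"
    and "fin_generated G"
    and "countable X"
    and "\<forall>x\<in>X. w x > 0"
    and "balanced G X \<phi> w"
    and "\<exists>T \<Psi>. compression_system G X \<phi> w T \<Psi>"
  shows "\<not> (\<exists>m. is_mean X m \<and> w_invariant G X \<phi> w m)"
proof
  assume "\<exists>m. is_mean X m \<and> w_invariant G X \<phi> w m"
  then obtain m where mean: "is_mean X m" and winv: "w_invariant G X \<phi> w m" by blast
  obtain T \<Psi> where cs: "compression_system G X \<phi> w T \<Psi>" using assms(6) by blast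
  note GA = assms(1)
  have fT: "finite T" and TG: "T \<subseteq> carrier G"
    and Pb: "\<And>g. g \<in> T \<Longrightarrow> bounded_on X (\<Psi> g)"
    and Pn: "\<And>g x. g \<in> T \<Longrightarrow> x \<in> X \<Longrightarrow> \<Psi> g x \<ge> 0"
    and P1: "\<And>x. x \<in> X \<Longrightarrow> (\<Sum>g\<in>T. \<Psi> g x) = 1"
    and P2: "\<And>x. x \<in> X \<Longrightarrow> (\<Sum>g\<in>T. \<Psi> g (\<phi> (inv\<^bsub>G\<^esub> g) x) * (w (\<phi> (inv\<^bsub>G\<^esub> g) x) / w x)) < 1/2"
    using cs unfolding compression_system_def by auto
  define S where "S = (\<lambda>g x. \<Psi> g (\<phi> (inv\<^bsub>G\<^esub> g) x) * (w (\<phi> (inv\<^bsub>G\<^esub> g) x) / w x))"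
  have wpos: "\<And>x. x \<in> X \<Longrightarrow> w x > 0" using assms(4) by blast
  have Seq: "m (S g) = m (\<Psi> g)" and Sb: "bounded_on X (S g)" if gT: "g \<in> T" for g
  proof -
    have g: "g \<in> carrier G" using gT TG by blast
    have ig: "inv\<^bsub>G\<^esub> g \<in> carrier G"
      using g GA group.inv_closed group_action.group_hom group_hom.axioms(1) by metis
    define F where "F = (\<lambda>x. \<Psi> g x * (w x / w (\<phi> g x)))"
    have b1: "bounded_on X (\<lambda>y. w (\<phi> (inv\<^bsub>G\<^esub> g) y) / w y)"
      using assms(5) ig unfolding balanced_def by blast
    have b2: "bounded_on X (\<lambda>x. w x / w (\<phi> g x))"
    proof (rule bo_cong[OF bo_comp[OF b1, of "\<phi> g"]])
      show "\<And>x. x \<in> X \<Longrightarrow> \<phi> g x \<in> X" using ga_closed[OF GA g] .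
      show "\<And>x. x \<in> X \<Longrightarrow> w x / w (\<phi> g x) = w (\<phi> (inv\<^bsub>G\<^esub> g) (\<phi> g x)) / w (\<phi> g x)"
        using ga_inv1[OF GA g] by simp
    qed
    have Fb: "bounded_on X F" unfolding F_def using bo_mult[OF Pb[OF gT] b2] .
    have Fn: "\<And>x. x \<in> X \<Longrightarrow> F x \<ge> 0" unfolding F_def
      using Pn[OF gT] wpos ga_closed[OF GA g] by (simp add: less_imp_le)
    have rb: "bounded_on X (\<lambda>x. w (\<phi> g x) / w x)" using assms(5) g unfolding balanced_def by blast
    have k: "m (\<lambda>x. F (\<phi> (inv\<^bsub>G\<^esub> g) x)) = m (\<lambda>x. F x * (w (\<phi> g x) / w x))"
      by (rule key[OF GA g mean winv rb Fb Fn])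
    have e1: "\<And>x. x \<in> X \<Longrightarrow> F (\<phi> (inv\<^bsub>G\<^esub> g) x) = S g x"
      unfolding F_def S_def using ga_inv2[OF GA g] by simp
    have e2: "\<And>x. x \<in> X \<Longrightarrow> F x * (w (\<phi> g x) / w x) = \<Psi> g x"
      unfolding F_def using wpos ga_closed[OF GA g] by (simp add: less_imp_neq[symmetric])
    have FhB: "bounded_on X (\<lambda>x. F (\<phi> (inv\<^bsub>G\<^esub> g) x))" using bo_comp[OF Fb ga_closed[OF GA ig]] .
    show SB: "bounded_on X (S g)" by (rule bo_cong[OF FhB], rule e1[symmetric])
    have "m (S g) = m (\<lambda>x. F (\<phi> (inv\<^bsub>G\<^esub> g) x))"
      by (rule mean_cong[OF mean SB FhB], rule e1[symmetric])
    also have "\<dots> = m (\<lambda>x. F x * (w (\<phi> g x) / w x))" by (rule k)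
    also have "\<dots> = m (\<Psi> g)"
      by (rule mean_cong[OF mean bo_mult[OF Fb rb] Pb[OF gT]], rule e2)
    finally show "m (S g) = m (\<Psi> g)" .
  qed
  have "1 = m (\<lambda>x. 1)" using mean_const[OF mean] by simp
  also have "\<dots> = m (\<lambda>x. \<Sum>g\<in>T. \<Psi> g x)"
    proof (rule mean_cong[OF mean bo_const bo_sum[OF fT Pb]])
    fix x assume x: "x \<in> X"
    show "1 = (\<Sum>g\<in>T. \<Psi> g x)" using P1[OF x] by simp
  qed
  also have "\<dots> = (\<Sum>g\<in>T. m (\<Psi> g))" using mean_sum[OF mean fT Pb] by simp
  also have "\<dots> = (\<Sum>g\<in>T. m (S g))" using Seq by simp
  also have "\<dots> = m (\<lambda>x. \<Sum>g\<in>T. S g x)" using mean_sum[OF mean fT Sb] by simp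
  also have "\<dots> \<le> m (\<lambda>x. 1/2)"
  proof (rule mean_mono[OF mean bo_sum[OF fT Sb] bo_const])
    fix x assume x: "x \<in> X"
    show "(\<Sum>g\<in>T. S g x) \<le> 1/2" using P2[OF x] unfolding S_def by linarith
  qed
  also have "\<dots> = 1/2" using mean_const[OF mean] by simp
  finally show False by simp
qed

end
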